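(* Let $P$ and $Q$ be rearrangement invariant spaces of complex valued functions on $\mathbb R^n$, let $U$ and $V$ be strictly positive measurable functions on $\mathbb R^n$, and let $C>0$. Suppose that whenever $f$ is integrable and $Uf\in P$, we have $V\widehat f\in Q'$ and \[ \|V\widehat f\|_{Q'}\le C\|Uf\|_P. \] Then for every integrable $g$ with $g/V\in Q$, we have $\widehat g/U\in P'$ and \[ \|\widehat g/U\|_{P'}\le C\|g/V\|_Q. \]
   Context: The Fourier transform of an integrable $f\colon\mathbb R^n\to\mathbb C$ is $\widehat f(x)=\int_{\mathbb R^n}e^{-2\pi i x\cdot t}f(t)\,dt$. A rearrangement invariant space $X$ (Bennett–Sharpley) is defined by a norm $\rho$ on non-negative measurable functions on $\mathbb R^n$ such that: $\rho(f)=0$ iff $f=0$ a.e., $\rho(af)=a\rho(f)$ for $a\ge0$, $\rho(f+g)\le\rho(f)+\rho(g)$; $0\le g\le f$ a.e. implies $\rho(g)\le\rho(f)$; $0\le f_k\uparrow f$ a.e. implies $\rho(f_k)\uparrow\rho(f)$; $\rho(\chi_E)<\infty$ for every set $E$ of finite measure; for every $E$ of finite measure there is $C_E$ with $\int_E f\le C_E\rho(f)$; and $\rho(f)=\rho(g)$ whenever $f,g$ are equimeasurable. Then $X=\{f \text{ measurable}:\|f\|_X:=\rho(|f|)<\infty\}$. The associate space $X'$ is the set of measurable $g$ with $\|g\|_{X'}=\sup\{\int_{\mathbb R^n}|fg|:\|f\|_X\le1\}<\infty$. *)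

theory Defs
  imports "HOL-Analysis.Analysis"
begin

definition fourier :: "('a::euclidean_space \<Rightarrow> complex) \<Rightarrow> 'a \<Rightarrow> complex" where
  "fourier f x = (LINT t|lebesgue. cis (- 2 * pi * (x \<bullet> t)) * f t)"

text \<open>A rearrangement invariant (Banach function) norm in the sense of Bennett--Sharpley,
  acting on non-negative (extended-valued) Lebesgue measurable functions.\<close>
definition ri_norm :: "(('a::euclidean_space \<Rightarrow> ennreal) \<Rightarrow> ennreal) \<Rightarrow> bool" where
  "ri_norm \<rho> \<longleftrightarrow>
    (\<forall>f \<in> borel_measurable lebesgue. \<rho> f = 0 \<longleftrightarrow> (AE x in lebesgue. f x = 0)) \<and>
    (\<forall>f \<in> borel_measurable lebesgue. \<forall>a::real. a \<ge> 0 \<longrightarrow>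
        \<rho> (\<lambda>x. ennreal a * f x) = ennreal a * \<rho> f) \<and>
    (\<forall>f \<in> borel_measurable lebesgue. \<forall>g \<in> borel_measurable lebesgue.
        \<rho> (\<lambda>x. f x + g x) \<le> \<rho> f + \<rho> g) \<and>
    (\<forall>f \<in> borel_measurable lebesgue. \<forall>g \<in> borel_measurable lebesgue.
        (AE x in lebesgue. g x \<le> f x) \<longrightarrow> \<rho> g \<le> \<rho> f) \<and>
    (\<forall>F f. (\<forall>k. F k \<in> borel_measurable lebesgue) \<longrightarrow> f \<in> borel_measurable lebesgue \<longrightarrow>
        (AE x in lebesgue. incseq (\<lambda>k. F k x) \<and> (\<lambda>k. F k x) \<longlonglongrightarrow> f x) \<longrightarrow>
        incseq (\<lambda>k. \<rho> (F k)) \<and> (\<lambda>k. \<rho> (F k)) \<longlonglongrightarrow> \<rho> f) \<and>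
    (\<forall>E \<in> sets lebesgue. emeasure lebesgue E < \<infinity> \<longrightarrow> \<rho> (indicator E) < \<infinity>) \<and>
    (\<forall>E \<in> sets lebesgue. emeasure lebesgue E < \<infinity> \<longrightarrow>
        (\<exists>C::real. \<forall>f \<in> borel_measurable lebesgue.
            set_nn_integral lebesgue E f \<le> ennreal C * \<rho> f)) \<and>
    (\<forall>f \<in> borel_measurable lebesgue. \<forall>g \<in> borel_measurable lebesgue.
        (\<forall>s::real. s \<ge> 0 \<longrightarrow>
           emeasure lebesgue {x. ennreal s < f x} = emeasure lebesgue {x. ennreal s < g x})
        \<longrightarrow> \<rho> f = \<rho> g)"

definition ri_fnorm :: "(('a::euclidean_space \<Rightarrow> ennreal) \<Rightarrow> ennreal) \<Rightarrow> ('a \<Rightarrow> complex) \<Rightarrow> ennreal" where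
  "ri_fnorm \<rho> f = \<rho> (\<lambda>x. ennreal (cmod (f x)))"

definition ri_space :: "(('a::euclidean_space \<Rightarrow> ennreal) \<Rightarrow> ennreal) \<Rightarrow> ('a \<Rightarrow> complex) set" where
  "ri_space \<rho> = {f \<in> borel_measurable lebesgue. ri_fnorm \<rho> f < \<infinity>}"

definition assoc_norm :: "(('a::euclidean_space \<Rightarrow> ennreal) \<Rightarrow> ennreal) \<Rightarrow> ('a \<Rightarrow> complex) \<Rightarrow> ennreal" where
  "assoc_norm \<rho> g = (SUP f \<in> {f \<in> borel_measurable lebesgue. ri_fnorm \<rho> f \<le> 1}.
       \<integral>\<^sup>+ x. ennreal (cmod (f x * g x)) \<partial>lebesgue)"

definition assoc_space :: "(('a::euclidean_space \<Rightarrow> ennreal) \<Rightarrow> ennreal) \<Rightarrow> ('a \<Rightarrow> complex) set" where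
  "assoc_space \<rho> = {g \<in> borel_measurable lebesgue. assoc_norm \<rho> g < \<infinity>}"

end

theory Submission
  imports Defs
begin


lemma sf_lebesgue: "sigma_finite_measure (lebesgue :: 'a::euclidean_space measure)"
proof
  show "\<exists>A. countable A \<and> A \<subseteq> sets (lebesgue::'a measure) \<and> \<Union> A = space lebesgue \<and> (\<forall>a\<in>A. emeasure lebesgue a \<noteq> \<infinity>)"
  proof (intro exI[of _ "range (\<lambda>n::nat. cball (0::'a) (real n))"] conjI)
    show "\<Union> (range (\<lambda>n::nat. cball (0::'a) (real n))) = space lebesgue"
    proof -
      have "x \<in> cball 0 (real (nat \<lceil>norm x\<rceil>))" for x :: 'a
        by (simp add: dist_norm)
      then show ?thesis by (auto simp: dist_norm intro: real_arch_simple)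
    qed
    show "\<forall>a\<in>range (\<lambda>n::nat. cball (0::'a) (real n)). emeasure lebesgue a \<noteq> \<infinity>"
    proof
      fix a assume "a \<in> range (\<lambda>n::nat. cball (0::'a) (real n))"
      then obtain n::nat where a: "a = cball 0 (real n)" by auto
      have "emeasure lborel (cball (0::'a) (real n)) < \<infinity>" by (rule emeasure_lborel_cball_finite)
      then show "emeasure lebesgue a \<noteq> \<infinity>" unfolding a by (simp add: emeasure_completion)
    qed
  qed auto
qed

interpretation leb2: pair_sigma_finite "lebesgue :: 'a::euclidean_space measure" "lebesgue :: 'a measure"
  by (simp add: pair_sigma_finite_def sf_lebesgue)

lemma id_leb_borel: "(\<lambda>x. x) \<in> borel_measurable (lebesgue :: 'a::euclidean_space measure)"
  by (simp add: measurable_completion)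

lemma kernel_meas:
  fixes g :: "'a::euclidean_space \<Rightarrow> complex"
  assumes [measurable]: "g \<in> borel_measurable lebesgue"
  shows "(\<lambda>p::'a\<times>'a. cis (- 2 * pi * (fst p \<bullet> snd p)) * g (snd p)) \<in> borel_measurable (lebesgue \<Otimes>\<^sub>M lebesgue)"
proof -
  have [measurable]: "(\<lambda>p::'a\<times>'a. fst p) \<in> borel_measurable (lebesgue \<Otimes>\<^sub>M lebesgue)"
    using measurable_compose[OF measurable_fst id_leb_borel] by auto
  have [measurable]: "(\<lambda>p::'a\<times>'a. snd p) \<in> borel_measurable (lebesgue \<Otimes>\<^sub>M lebesgue)"
    using measurable_compose[OF measurable_snd id_leb_borel] by auto
  have [measurable]: "(\<lambda>p::'a\<times>'a. g (snd p)) \<in> borel_measurable (lebesgue \<Otimes>\<^sub>M lebesgue)"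
    using measurable_compose[OF measurable_snd assms] by auto
  have "(\<lambda>p::'a\<times>'a. - 2 * pi * (fst p \<bullet> snd p)) \<in> borel_measurable (lebesgue \<Otimes>\<^sub>M lebesgue)"
    by measurable
  then have [measurable]: "(\<lambda>p::'a\<times>'a. cis (- 2 * pi * (fst p \<bullet> snd p))) \<in> borel_measurable (lebesgue \<Otimes>\<^sub>M lebesgue)"
    using borel_measurable_continuous_on[OF continuous_on_cis[OF continuous_on_id]] by blast
  show ?thesis by measurable
qed

lemma fourier_meas:
  fixes g :: "'a::euclidean_space \<Rightarrow> complex"
  assumes "g \<in> borel_measurable lebesgue"
  shows "fourier g \<in> borel_measurable lebesgue"
proof -
  have "case_prod (\<lambda>x t. cis (- 2 * pi * (x \<bullet> t)) * g t) \<in> borel_measurable (lebesgue \<Otimes>\<^sub>M lebesgue)"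
    using kernel_meas[OF assms] by (simp add: split_beta')
  from sigma_finite_measure.borel_measurable_lebesgue_integral[OF sf_lebesgue this]
  show ?thesis unfolding fourier_def[abs_def] .
qed

lemma fourier_swap:
  fixes f g :: "'a::euclidean_space \<Rightarrow> complex"
  assumes f: "integrable lebesgue f" and g: "integrable lebesgue g"
  shows "integrable lebesgue (\<lambda>x. f x * fourier g x)"
    and "integrable lebesgue (\<lambda>t. g t * fourier f t)"
    and "(\<integral>x. f x * fourier g x \<partial>lebesgue) = (\<integral>t. g t * fourier f t \<partial>lebesgue)"
proof -
  define F where "F x t = f x * (cis (- 2 * pi * (x \<bullet> t)) * g t)" for x t
  have fm[measurable]: "f \<in> borel_measurable lebesgue" using f by auto
  have gm[measurable]: "g \<in> borel_measurable lebesgue" using g by auto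
  have fm2[measurable]: "(\<lambda>p::'a\<times>'a. f (fst p)) \<in> borel_measurable (lebesgue \<Otimes>\<^sub>M lebesgue)"
    using measurable_compose[OF measurable_fst fm] by auto
  have km[measurable]: "(\<lambda>p::'a\<times>'a. cis (- 2 * pi * (fst p \<bullet> snd p)) * g (snd p)) \<in> borel_measurable (lebesgue \<Otimes>\<^sub>M lebesgue)"
    by (rule kernel_meas[OF gm])
  have Fm: "case_prod F \<in> borel_measurable (lebesgue \<Otimes>\<^sub>M lebesgue)"
    unfolding F_def split_beta' by measurable
  have nF: "norm (F x t) = norm (f x) * norm (g t)" for x t
    by (simp add: F_def norm_mult)
  have kint: "integrable lebesgue (\<lambda>t. cis (- 2 * pi * (x \<bullet> t)) * g t)" for x
  proof (rule Bochner_Integration.integrable_bound[OF g])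
    have "(\<lambda>p. cis (- 2 * pi * (fst p \<bullet> snd p)) * g (snd p)) \<circ> (\<lambda>t. (x, t)) \<in> borel_measurable lebesgue"
      by (rule measurable_comp[OF _ km]) simp
    then show "(\<lambda>t. cis (- 2 * pi * (x \<bullet> t)) * g t) \<in> borel_measurable lebesgue" by (simp add: comp_def)
  qed (simp add: norm_mult)
  have intF: "integrable (lebesgue \<Otimes>\<^sub>M lebesgue) (case_prod F)"
  proof (rule leb2.Fubini_integrable[OF Fm])
    show "integrable lebesgue (\<lambda>x. \<integral>t. norm (case_prod F (x, t)) \<partial>lebesgue)"
      by (simp add: nF f g integrable_norm)
    show "AE x in lebesgue. integrable lebesgue (\<lambda>t. case_prod F (x, t))"
      unfolding F_def split_conv by (intro AE_I2 integrable_mult_right kint)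
  qed
  have e1: "(\<integral>t. F x t \<partial>lebesgue) = f x * fourier g x" for x
    by (simp add: F_def fourier_def)
  have e2: "(\<integral>x. F x t \<partial>lebesgue) = g t * fourier f t" for t
  proof -
    have "F x t = g t * (cis (- 2 * pi * (t \<bullet> x)) * f x)" for x
      by (simp add: F_def inner_commute)
    then show ?thesis by (simp add: fourier_def)
  qed
  show "integrable lebesgue (\<lambda>x. f x * fourier g x)"
    using leb2.integrable_fst[OF intF] by (simp add: e1)
  show "integrable lebesgue (\<lambda>t. g t * fourier f t)"
    using leb2.integrable_snd[OF intF] by (simp add: e2)
  show "(\<integral>x. f x * fourier g x \<partial>lebesgue) = (\<integral>t. g t * fourier f t \<partial>lebesgue)"
    using leb2.Fubini_integral[OF intF] by (simp add: e1 e2)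
qed

lemma holder:
  fixes \<phi> \<psi> :: "'a::euclidean_space \<Rightarrow> complex"
  assumes rQ: "ri_norm Q" and pm[measurable]: "\<phi> \<in> borel_measurable lebesgue"
    and qm[measurable]: "\<psi> \<in> borel_measurable lebesgue" and fin: "ri_fnorm Q \<phi> < \<infinity>"
  shows "(\<integral>\<^sup>+x. ennreal (cmod (\<phi> x * \<psi> x)) \<partial>lebesgue) \<le> ri_fnorm Q \<phi> * assoc_norm Q \<psi>"
proof -
  have z: "\<And>f. f \<in> borel_measurable lebesgue \<Longrightarrow> Q f = 0 \<longleftrightarrow> (AE x in lebesgue. f x = 0)"
    and h: "\<And>f a. f \<in> borel_measurable lebesgue \<Longrightarrow> a \<ge> 0 \<Longrightarrow> Q (\<lambda>x. ennreal a * f x) = ennreal a * Q f"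
    using rQ unfolding ri_norm_def by blast+
  have nm: "(\<lambda>x. ennreal (cmod (\<phi> x))) \<in> borel_measurable lebesgue" by measurable
  show ?thesis
  proof (cases "ri_fnorm Q \<phi> = 0")
    case True
    then have "AE x in lebesgue. ennreal (cmod (\<phi> x)) = 0"
      using z[OF nm] unfolding ri_fnorm_def by simp
    then have "AE x in lebesgue. ennreal (cmod (\<phi> x * \<psi> x)) = 0"
      by eventually_elim simp
    then have "(\<integral>\<^sup>+x. ennreal (cmod (\<phi> x * \<psi> x)) \<partial>lebesgue) = 0"
      by (simp add: nn_integral_0_iff_AE)
    then show ?thesis by simp
  next
    case False
    define r where "r = enn2real (ri_fnorm Q \<phi>)"
    have a: "ri_fnorm Q \<phi> = ennreal r" using fin unfolding r_def
      by (simp add: ennreal_enn2real_if)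
    have rpos: "r > 0" using False a
      by (metis enn2real_nonneg ennreal_0 order_le_less r_def)
    define \<phi>' where "\<phi>' x = \<phi> x / complex_of_real r" for x
    have p'm: "\<phi>' \<in> borel_measurable lebesgue" unfolding \<phi>'_def by measurable
    have eq1: "ennreal (cmod (\<phi>' x)) = ennreal (1 / r) * ennreal (cmod (\<phi> x))" for x
    proof -
      have "cmod (\<phi>' x) = (1 / r) * cmod (\<phi> x)" using rpos by (simp add: \<phi>'_def norm_divide)
      moreover have "ennreal ((1/r) * cmod (\<phi> x)) = ennreal (1/r) * ennreal (cmod (\<phi> x))"
        by (rule ennreal_mult) (use rpos in auto)
      ultimately show ?thesis by metis
    qed
    have "ri_fnorm Q \<phi>' = ennreal (1 / r) * ri_fnorm Q \<phi>"
      unfolding ri_fnorm_def eq1 using h[OF nm, of "1/r"] rpos by simp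
    also have "\<dots> = 1" using rpos a by (simp add: ennreal_mult''[symmetric])
    finally have n1: "ri_fnorm Q \<phi>' \<le> 1" by simp
    have b: "(\<integral>\<^sup>+x. ennreal (cmod (\<phi>' x * \<psi> x)) \<partial>lebesgue) \<le> assoc_norm Q \<psi>"
      unfolding assoc_norm_def by (rule SUP_upper) (use p'm n1 in auto)
    have eq2: "ennreal (cmod (\<phi> x * \<psi> x)) = ennreal r * ennreal (cmod (\<phi>' x * \<psi> x))" for x
      using rpos by (simp add: \<phi>'_def norm_mult norm_divide ennreal_mult''[symmetric])
    have "(\<integral>\<^sup>+x. ennreal (cmod (\<phi> x * \<psi> x)) \<partial>lebesgue)
        = ennreal r * (\<integral>\<^sup>+x. ennreal (cmod (\<phi>' x * \<psi> x)) \<partial>lebesgue)"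
      unfolding eq2 by (rule nn_integral_cmult) (use p'm in measurable)
    also have "\<dots> \<le> ennreal r * assoc_norm Q \<psi>" by (rule mult_left_mono[OF b]) simp
    finally show ?thesis using a by simp
  qed
qed

lemma cnj_sgn_mult: "cnj (sgn z) * z = complex_of_real (cmod z)"
proof (cases "z = 0")
  case False
  have "cnj z * z = complex_of_real ((cmod z)^2)" by (metis complex_norm_square mult.commute)
  have "cnj (sgn z) * z = (cnj z * z) / complex_of_real (cmod z)"
    by (simp add: sgn_div_norm scaleR_conv_of_real divide_inverse mult.commute mult.left_commute)
  also have "\<dots> = complex_of_real (cmod z)" using False
    by (simp add: \<open>cnj z * z = _\<close> power2_eq_square)
  finally show ?thesis .
qed simp

lemma test_meas:
  fixes h :: "'a::euclidean_space \<Rightarrow> complex"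
  assumes [measurable]: "h \<in> borel_measurable lebesgue" "U \<in> borel_measurable lebesgue" "q \<in> borel_measurable lebesgue"
  shows "(\<lambda>x. if norm x \<le> real k \<and> cmod (h x) \<le> real k * U x then complex_of_real (cmod (h x) / U x) * cnj (sgn (q x)) else 0) \<in> borel_measurable lebesgue"
proof -
  have [measurable]: "(\<lambda>x. sgn (q x)) \<in> borel_measurable lebesgue"
    using measurable_compose[OF assms(3) borel_measurable_sgn] by simp
  have [measurable]: "(\<lambda>x. cnj (sgn (q x))) \<in> borel_measurable lebesgue"
    by (rule borel_measurable_continuous_on[OF linear_continuous_on[OF bounded_linear_cnj]]) measurable
  note id_leb_borel[measurable]
  show ?thesis by measurable
qed


theorem lemma2p1:
  fixes P Q :: "('a::euclidean_space \<Rightarrow> ennreal) \<Rightarrow> ennreal"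
    and U V :: "'a \<Rightarrow> real" and C :: real
  assumes "ri_norm P" and "ri_norm Q"
    and "U \<in> borel_measurable lebesgue" and "V \<in> borel_measurable lebesgue"
    and "\<And>x. U x > 0" and "\<And>x. V x > 0"
    and "C > 0"
    and hyp: "\<And>f. integrable lebesgue f \<Longrightarrow> (\<lambda>x. complex_of_real (U x) * f x) \<in> ri_space P \<Longrightarrow>
         (\<lambda>x. complex_of_real (V x) * fourier f x) \<in> assoc_space Q \<and>
         assoc_norm Q (\<lambda>x. complex_of_real (V x) * fourier f x)
           \<le> ennreal C * ri_fnorm P (\<lambda>x. complex_of_real (U x) * f x)"
    and "integrable lebesgue g" and "(\<lambda>x. g x / complex_of_real (V x)) \<in> ri_space Q"
  shows "(\<lambda>x. fourier g x / complex_of_real (U x)) \<in> assoc_space P \<and>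
         assoc_norm P (\<lambda>x. fourier g x / complex_of_real (U x))
           \<le> ennreal C * ri_fnorm Q (\<lambda>x. g x / complex_of_real (V x))"
proof -
  note Um[measurable] = assms(3)
  note Vm[measurable] = assms(4)
  have Upos: "\<And>x. U x > 0" by (rule assms(5))
  have gi: "integrable lebesgue g" by (rule assms(9))
  have gm[measurable]: "g \<in> borel_measurable lebesgue" using gi by auto
  have ghm[measurable]: "fourier g \<in> borel_measurable lebesgue" by (rule fourier_meas[OF gm])
  have gVm: "(\<lambda>x. g x / complex_of_real (V x)) \<in> borel_measurable lebesgue"
    and gVfin: "ri_fnorm Q (\<lambda>x. g x / complex_of_real (V x)) < \<infinity>"
    using assms(10) unfolding ri_space_def by auto
  have Pmono: "\<And>f g. f \<in> borel_measurable lebesgue \<Longrightarrow> g \<in> borel_measurable lebesgue \<Longrightarrow>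
        (AE x in lebesgue. g x \<le> f x) \<Longrightarrow> P g \<le> P f"
    using assms(1) unfolding ri_norm_def by blast
  define B where "B = ennreal C * ri_fnorm Q (\<lambda>x. g x / complex_of_real (V x))"
  define w where "w x = fourier g x / complex_of_real (U x)" for x
  have wm: "w \<in> borel_measurable lebesgue" unfolding w_def by measurable
  have key: "(\<integral>\<^sup>+x. ennreal (cmod (h x * w x)) \<partial>lebesgue) \<le> B"
    if hm[measurable]: "h \<in> borel_measurable lebesgue" and h1: "ri_fnorm P h \<le> 1" for h
  proof -
    define E where "E k = {x. norm x \<le> real k \<and> cmod (h x) \<le> real k * U x}" for k :: nat
    define fk where "fk k x = (if norm x \<le> real k \<and> cmod (h x) \<le> real k * U x
        then complex_of_real (cmod (h x) / U x) * cnj (sgn (fourier g x)) else 0)" for k :: nat and x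
    have Em[measurable]: "E k \<in> sets lebesgue" for k
    proof -
      note id_leb_borel[measurable]
      have "{x \<in> space lebesgue. norm x \<le> real k \<and> cmod (h x) \<le> real k * U x} \<in> sets lebesgue"
        by measurable
      then show ?thesis unfolding E_def by simp
    qed
    have bnd: "(\<integral>\<^sup>+x. ennreal (indicator (E k) x * cmod (h x * w x)) \<partial>lebesgue) \<le> B" for k
    proof -
      have fkm[measurable]: "fk k \<in> borel_measurable lebesgue"
        using test_meas[OF hm Um ghm, of k] unfolding fk_def[abs_def] .
      have ncs: "cmod (cnj (sgn z)) \<le> 1" for z :: complex
        by (simp add: norm_sgn)
      have nfk: "cmod (fk k x) \<le> cmod (h x) / U x" for x
      proof -
        have "cmod (complex_of_real (cmod (h x) / U x) * cnj (sgn (fourier g x))) \<le> cmod (h x) / U x * 1"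
        proof -
          have e: "cmod (complex_of_real (cmod (h x) / U x)) = cmod (h x) / U x"
            using Upos[of x] by (simp only: norm_of_real) (simp add: abs_of_nonneg)
          show ?thesis unfolding norm_mult e using Upos[of x] ncs
            by (intro mult_left_mono) auto
        qed
        then show ?thesis unfolding fk_def using Upos[of x] by auto
      qed
      have cb: "cball (0::'a) (real k) \<in> sets lebesgue"
      proof -
        have "cball (0::'a) (real k) \<in> sets lborel" by simp
        then show ?thesis by (simp add: sets_completionI_sets)
      qed
      have fki: "integrable lebesgue (fk k)"
      proof (rule integrableI_bounded_set[where A="cball 0 (real k)" and B="real k"])
        show "cball (0::'a) (real k) \<in> sets lebesgue" by (rule cb)
        show "emeasure lebesgue (cball (0::'a) (real k)) < \<infinity>"
          using emeasure_lborel_cball_finite[of "0::'a" "real k"] by (simp add: emeasure_completion)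
        show "AE x in lebesgue. x \<in> cball 0 (real k) \<longrightarrow> norm (fk k x) \<le> real k"
        proof (rule AE_I2, rule impI)
          fix x
          show "norm (fk k x) \<le> real k"
          proof (cases "norm x \<le> real k \<and> cmod (h x) \<le> real k * U x")
            case True
            then have "cmod (h x) / U x \<le> real k" using Upos[of x] by (simp add: pos_divide_le_eq)
            then show ?thesis using nfk[of x] by simp
          next
            case False
            have "fk k x = 0" unfolding fk_def using False by (rule if_not_P)
            then show ?thesis by simp
          qed
        qed
        show "AE x in lebesgue. x \<notin> cball 0 (real k) \<longrightarrow> fk k x = 0"
          by (rule AE_I2) (simp add: fk_def dist_norm)
      qed (rule fkm)
      have Ufkm: "(\<lambda>x. complex_of_real (U x) * fk k x) \<in> borel_measurable lebesgue" by measurable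
      have nUfk: "cmod (complex_of_real (U x) * fk k x) \<le> cmod (h x)" for x
      proof -
        have "cmod (complex_of_real (U x) * fk k x) = U x * cmod (fk k x)"
          using Upos[of x] by (simp add: norm_mult abs_of_pos)
        also have "\<dots> \<le> U x * (cmod (h x) / U x)" using nfk[of x] Upos[of x] by (intro mult_left_mono) auto
        also have "\<dots> = cmod (h x)" using Upos[of x] by simp
        finally show ?thesis .
      qed
      have "ri_fnorm P (\<lambda>x. complex_of_real (U x) * fk k x) \<le> ri_fnorm P h"
        unfolding ri_fnorm_def by (rule Pmono) (use nUfk in \<open>auto intro!: ennreal_leI\<close>)
      then have Pf1: "ri_fnorm P (\<lambda>x. complex_of_real (U x) * fk k x) \<le> 1" using h1 by simp
      then have "(\<lambda>x. complex_of_real (U x) * fk k x) \<in> ri_space P"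
        unfolding ri_space_def using Ufkm by (auto simp: top.not_eq_extremum[symmetric] dest: order.strict_trans1[OF _ ennreal_one_less_top])
      note hh = hyp[OF fki this]
      have Vm: "(\<lambda>x. complex_of_real (V x) * fourier (fk k) x) \<in> borel_measurable lebesgue"
        using hh unfolding assoc_space_def by auto
      have "ennreal C * ri_fnorm P (\<lambda>x. complex_of_real (U x) * fk k x) \<le> ennreal C * 1"
        by (rule mult_left_mono[OF Pf1]) simp
      then have "ennreal C * ri_fnorm P (\<lambda>x. complex_of_real (U x) * fk k x) \<le> ennreal C" by simp
      then have an: "assoc_norm Q (\<lambda>x. complex_of_real (V x) * fourier (fk k) x) \<le> ennreal C"
        using conjunct2[OF hh] by (rule order.trans[rotated])
      note sw = fourier_swap[OF fki gi]
      define \<psi> where "\<psi> x = indicator (E k) x * cmod (h x * w x)" for x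
      have prod: "fk k x * fourier g x = complex_of_real (\<psi> x)" for x
      proof (cases "norm x \<le> real k \<and> cmod (h x) \<le> real k * U x")
        case True
        then have xE: "x \<in> E k" unfolding E_def by simp
        have "fk k x * fourier g x = complex_of_real (cmod (h x) / U x) * (cnj (sgn (fourier g x)) * fourier g x)"
          using True unfolding fk_def by (simp add: mult.assoc)
        also have "\<dots> = complex_of_real (cmod (h x) / U x * cmod (fourier g x))" by (simp add: cnj_sgn_mult)
        also have "cmod (h x) / U x * cmod (fourier g x) = cmod (h x * w x)"
          using Upos[of x] by (simp add: w_def norm_mult norm_divide abs_of_pos)
        finally show ?thesis using xE by (simp add: \<psi>_def)
      next
        case False
        then have "x \<notin> E k" unfolding E_def by simp
        moreover have "fk k x = 0" unfolding fk_def using False by (rule if_not_P)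
        ultimately show ?thesis by (simp add: \<psi>_def)
      qed
      have psi_nn: "\<psi> x \<ge> 0" for x by (simp add: \<psi>_def)
      have psi_eq: "\<psi> x = cmod (fk k x * fourier g x)" for x
        using psi_nn[of x] by (simp add: prod)
      have psi_int: "integrable lebesgue \<psi>"
        unfolding psi_eq[abs_def] by (rule integrable_norm[OF sw(1)])
      have "(\<integral>\<^sup>+x. ennreal (\<psi> x) \<partial>lebesgue) = ennreal (integral\<^sup>L lebesgue \<psi>)"
        by (rule nn_integral_eq_integral[OF psi_int]) (simp add: psi_nn)
      also have "integral\<^sup>L lebesgue \<psi> = cmod (\<integral>x. fk k x * fourier g x \<partial>lebesgue)"
      proof -
        have "(\<integral>x. fk k x * fourier g x \<partial>lebesgue) = complex_of_real (integral\<^sup>L lebesgue \<psi>)"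
          by (simp add: prod)
        moreover have "integral\<^sup>L lebesgue \<psi> \<ge> 0" by (rule integral_nonneg_AE) (simp add: psi_nn)
        ultimately show ?thesis by simp
      qed
      also have "(\<integral>x. fk k x * fourier g x \<partial>lebesgue) = (\<integral>t. g t * fourier (fk k) t \<partial>lebesgue)"
        by (rule sw(3))
      also have "ennreal (cmod (\<integral>t. g t * fourier (fk k) t \<partial>lebesgue))
          \<le> (\<integral>\<^sup>+t. ennreal (cmod (g t * fourier (fk k) t)) \<partial>lebesgue)"
        by (rule integral_norm_bound_ennreal[OF sw(2)])
      also have "\<dots> = (\<integral>\<^sup>+t. ennreal (cmod (g t / complex_of_real (V t) * (complex_of_real (V t) * fourier (fk k) t))) \<partial>lebesgue)"
      proof -
        have "g t * fourier (fk k) t = g t / complex_of_real (V t) * (complex_of_real (V t) * fourier (fk k) t)" for t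
          using assms(6)[of t] by (simp add: field_simps)
        then show ?thesis by simp
      qed
      also have "\<dots> \<le> ri_fnorm Q (\<lambda>x. g x / complex_of_real (V x)) * assoc_norm Q (\<lambda>x. complex_of_real (V x) * fourier (fk k) x)"
        by (rule holder[OF assms(2) gVm Vm gVfin])
      also have "\<dots> \<le> ri_fnorm Q (\<lambda>x. g x / complex_of_real (V x)) * ennreal C"
        by (rule mult_left_mono[OF an]) simp
      also have "\<dots> = B" unfolding B_def by (simp add: mult.commute)
      finally show ?thesis unfolding \<psi>_def .
    qed
    have inc: "incseq (\<lambda>k x. ennreal (indicator (E k) x * cmod (h x * w x)))"
      unfolding incseq_def le_fun_def
    proof (intro allI impI)
      fix k m :: nat and x assume km: "k \<le> m"
      have "E k \<subseteq> E m"
      proof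
        fix y assume "y \<in> E k"
        moreover have "real k * U y \<le> real m * U y" using km Upos[of y] by (intro mult_right_mono) auto
        ultimately show "y \<in> E m" using km unfolding E_def by auto
      qed
      then show "ennreal (indicator (E k) x * cmod (h x * w x)) \<le> ennreal (indicator (E m) x * cmod (h x * w x))"
        by (auto split: split_indicator intro!: ennreal_leI)
    qed
    have sup: "(SUP k. ennreal (indicator (E k) x * cmod (h x * w x))) = ennreal (cmod (h x * w x))" for x
    proof (rule antisym)
      show "(SUP k. ennreal (indicator (E k) x * cmod (h x * w x))) \<le> ennreal (cmod (h x * w x))"
        by (rule SUP_least) (auto split: split_indicator intro!: ennreal_leI)
      define k where "k = nat \<lceil>max (norm x) (cmod (h x) / U x)\<rceil>"
      have k1: "norm x \<le> real k" unfolding k_def by linarith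
      have "cmod (h x) / U x \<le> real k" unfolding k_def by linarith
      then have k2: "cmod (h x) \<le> real k * U x" using Upos[of x] by (simp add: pos_divide_le_eq)
      have "x \<in> E k" unfolding E_def using k1 k2 by simp
      then show "ennreal (cmod (h x * w x)) \<le> (SUP k. ennreal (indicator (E k) x * cmod (h x * w x)))"
        by (intro SUP_upper2[of k]) auto
    qed
    have "(\<integral>\<^sup>+x. ennreal (cmod (h x * w x)) \<partial>lebesgue)
        = (\<integral>\<^sup>+x. (SUP k. ennreal (indicator (E k) x * cmod (h x * w x))) \<partial>lebesgue)"
      by (simp add: sup)
    also have "\<dots> = (SUP k. \<integral>\<^sup>+x. ennreal (indicator (E k) x * cmod (h x * w x)) \<partial>lebesgue)"
    proof (rule nn_integral_monotone_convergence_SUP[OF inc])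
      fix k
      show "(\<lambda>x. ennreal (indicator (E k) x * cmod (h x * w x))) \<in> borel_measurable lebesgue"
        using wm by measurable
    qed
    also have "\<dots> \<le> B" by (rule SUP_least) (rule bnd)
    finally show ?thesis .
  qed
  have an: "assoc_norm P w \<le> B"
    unfolding assoc_norm_def by (rule SUP_least) (use key in auto)
  have "B < \<infinity>" unfolding B_def using gVfin by (simp add: ennreal_mult_less_top)
  then show ?thesis using an wm unfolding assoc_space_def w_def[abs_def] B_def by auto
qed

end
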